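(* Let $h\in\mathcal H$ and $\varphi(\underline{x})=h(x_0,x_1)$ on $X=[0,1]^{\mathbb N_0}$. If $\underline{x}\in\Omega_\varphi$ is periodic under $\sigma$, then $\underline{x}=a^\infty$ for some $a\in\mathrm{m}_h$.
   Context: $X=[0,1]^{\mathbb N_0}$ with metric $d_X(\underline{x},\underline{y})=\sum_{i\ge0}|x_i-y_i|/2^{i+1}$ and shift $\sigma(\underline{x})_i=x_{i+1}$. $\alpha_\varphi=\inf_\mu\int\varphi\,d\mu$ over $\sigma$-invariant Borel probability measures. $B(\underline{x},\underline{y},n;\varepsilon)=\{\underline{z}: d_X(\underline{x},\underline{z})<\varepsilon,\ d_X(\sigma^n\underline{z},\underline{y})<\varepsilon\}$; Mañé potential $S_\varphi(\underline{x},\underline{y})=\lim_{\varepsilon\to0}\inf\{\sum_{i=0}^{n-1}(\varphi(\sigma^i\underline{z})-\alpha_\varphi): n\in\mathbb N,\ \underline{z}\in B(\underline{x},\underline{y},n;\varepsilon)\}$; Aubry set $\Omega_\varphi=\{\underline{x}: S_\varphi(\underline{x},\underline{x})=0\}$. $h^*=\min_x h(x,x)$, $\mathrm{m}_h=\{a: h(a,a)=h^*\}$, $a^\infty=aaa\ldots$. A finite sequence $(x_k,\dots,x_l)$ in $[0,1]$ is minimal (for $h$) if $\sum_{i=k}^{l-1}h(x_i,x_{i+1})\le\sum_{i=k}^{l-1}h(y_i,y_{i+1})$ for every $(y_k,\dots,y_l)$ in $[0,1]$ with $y_k=x_k$, $y_l=x_l$. $\mathcal H$ is the set of Lipschitz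 $h:[0,1]^2\to\mathbb R$ such that (H3) if $\xi_1<\xi_2$ and $\eta_1<\eta_2$ then $h(\xi_1,\eta_1)+h(\xi_2,\eta_2)<h(\xi_1,\eta_2)+h(\xi_2,\eta_1)$; and (H4) if $(x_{-1},x_0,x_1)\ne(x'_{-1},x_0,x'_1)$ are both minimal then $(x_{-1}-x'_{-1})(x_1-x'_1)<0$. (It is known that $\alpha_\varphi=h^*$ in this setting.) *)

theory Defs
  imports "HOL-Probability.Probability"
begin

definition Xsp :: "(nat \<Rightarrow> real) set" where
  "Xsp = {x. \<forall>i. x i \<in> {0..1}}"

definition dX :: "(nat \<Rightarrow> real) \<Rightarrow> (nat \<Rightarrow> real) \<Rightarrow> real" where
  "dX x y = (\<Sum>i. \<bar>x i - y i\<bar> / 2 ^ (i + 1))"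

definition shift :: "(nat \<Rightarrow> real) \<Rightarrow> (nat \<Rightarrow> real)" where
  "shift x = (\<lambda>i. x (Suc i))"

definition inv_prob :: "(nat \<Rightarrow> real) measure \<Rightarrow> bool" where
  "inv_prob M \<longleftrightarrow> prob_space M \<and> sets M = sets (restrict_space borel Xsp)
     \<and> shift \<in> measurable M M \<and> distr M M shift = M"

definition alpha :: "((nat \<Rightarrow> real) \<Rightarrow> real) \<Rightarrow> real" where
  "alpha \<phi> = Inf {integral\<^sup>L M \<phi> | M. inv_prob M}"

definition Bset :: "(nat \<Rightarrow> real) \<Rightarrow> (nat \<Rightarrow> real) \<Rightarrow> nat \<Rightarrow> real \<Rightarrow> (nat \<Rightarrow> real) set" where
  "Bset x y n \<epsilon> = {z \<in> Xsp. dX x z < \<epsilon> \<and> dX ((shift ^^ n) z) y < \<epsilon>}"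

definition mane :: "((nat \<Rightarrow> real) \<Rightarrow> real) \<Rightarrow> (nat \<Rightarrow> real) \<Rightarrow> (nat \<Rightarrow> real) \<Rightarrow> ereal" where
  "mane \<phi> x y = Lim (at_right (0::real))
     (\<lambda>\<epsilon>. Inf {ereal (\<Sum>i<n. \<phi> ((shift ^^ i) z) - alpha \<phi>) | n z. n \<ge> 1 \<and> z \<in> Bset x y n \<epsilon>})"

definition aubry :: "((nat \<Rightarrow> real) \<Rightarrow> real) \<Rightarrow> (nat \<Rightarrow> real) set" where
  "aubry \<phi> = {x \<in> Xsp. mane \<phi> x x = 0}"

definition hstar :: "(real \<Rightarrow> real \<Rightarrow> real) \<Rightarrow> real" where
  "hstar h = Inf ((\<lambda>a. h a a) ` {0..1})"

definition mset_h :: "(real \<Rightarrow> real \<Rightarrow> real) \<Rightarrow> real set" where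
  "mset_h h = {a \<in> {0..1}. h a a = hstar h}"

definition cost :: "(real \<Rightarrow> real \<Rightarrow> real) \<Rightarrow> real list \<Rightarrow> real" where
  "cost h xs = (\<Sum>i<length xs - 1. h (xs ! i) (xs ! Suc i))"

definition minimal_seq :: "(real \<Rightarrow> real \<Rightarrow> real) \<Rightarrow> real list \<Rightarrow> bool" where
  "minimal_seq h xs \<longleftrightarrow> xs \<noteq> [] \<and> set xs \<subseteq> {0..1} \<and>
     (\<forall>ys. length ys = length xs \<and> set ys \<subseteq> {0..1} \<and> hd ys = hd xs \<and> last ys = last xs
        \<longrightarrow> cost h xs \<le> cost h ys)"

definition classH :: "(real \<Rightarrow> real \<Rightarrow> real) \<Rightarrow> bool" where
  "classH h \<longleftrightarrow>
     (\<exists>C::real. C-lipschitz_on ({0..1} \<times> {0..1}) (\<lambda>(a, b). h a b)) \<and>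
     (\<forall>\<xi>1 \<xi>2 \<eta>1 \<eta>2 :: real. \<xi>1 \<in> {0..1} \<and> \<xi>2 \<in> {0..1} \<and> \<eta>1 \<in> {0..1} \<and> \<eta>2 \<in> {0..1}
        \<and> \<xi>1 < \<xi>2 \<and> \<eta>1 < \<eta>2 \<longrightarrow> h \<xi>1 \<eta>1 + h \<xi>2 \<eta>2 < h \<xi>1 \<eta>2 + h \<xi>2 \<eta>1) \<and>
     (\<forall>a x0 b a' b' :: real. minimal_seq h [a, x0, b] \<and> minimal_seq h [a', x0, b'] \<and> (a, b) \<noteq> (a', b')
        \<longrightarrow> (a - a') * (b - b') < 0)"

end

theory Submission
  imports Defs
begin


fun pc :: "(real \<Rightarrow> real \<Rightarrow> real) \<Rightarrow> real list \<Rightarrow> real" where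
  "pc h (a # b # xs) = h a b + pc h (b # xs)"
| "pc h _ = 0"

definition cyc :: "(real \<Rightarrow> real \<Rightarrow> real) \<Rightarrow> real list \<Rightarrow> real" where
  "cyc h ws = pc h ws + h (last ws) (hd ws)"

definition dg :: "(real \<Rightarrow> real \<Rightarrow> real) \<Rightarrow> real list \<Rightarrow> real" where
  "dg h ws = sum_list (map (\<lambda>a. h a a) ws)"

definition wmonge :: "(real \<Rightarrow> real \<Rightarrow> real) \<Rightarrow> bool" where
  "wmonge h \<longleftrightarrow> (\<forall>p q r s. p \<in> {0..1} \<and> q \<in> {0..1} \<and> r \<in> {0..1} \<and> s \<in> {0..1}
     \<and> p \<le> q \<and> r \<le> s \<longrightarrow> h p r + h q s \<le> h p s + h q r)"

lemma wmongeD: "wmonge h \<Longrightarrow> p \<in> {0..1} \<Longrightarrow> q \<in> {0..1} \<Longrightarrow> r \<in> {0..1} \<Longrightarrow> s \<in> {0..1}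
  \<Longrightarrow> p \<le> q \<Longrightarrow> r \<le> s \<Longrightarrow> h p r + h q s \<le> h p s + h q r"
  unfolding wmonge_def by blast

lemma pc_Cons: "xs \<noteq> [] \<Longrightarrow> pc h (a # xs) = h a (hd xs) + pc h xs"
  by (cases xs) auto

lemma pc_append: "xs \<noteq> [] \<Longrightarrow> ys \<noteq> [] \<Longrightarrow>
   pc h (xs @ ys) = pc h xs + h (last xs) (hd ys) + pc h ys"
proof (induction xs)
  case Nil then show ?case by simp
next
  case (Cons a xs)
  show ?case
  proof (cases "xs = []")
    case True
    then show ?thesis using Cons by (simp add: pc_Cons)
  next
    case False
    then show ?thesis using Cons by (simp add: pc_Cons)
  qed
qed

lemma cyc_rotate1: "ws \<noteq> [] \<Longrightarrow> cyc h (rotate1 ws) = cyc h ws"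
proof (cases ws)
  case Nil then show ?thesis by simp
next
  case (Cons a xs)
  show ?thesis
  proof (cases "xs = []")
    case True then show ?thesis using Cons by simp
  next
    case False
    then show ?thesis using Cons by (simp add: cyc_def pc_append pc_Cons)
  qed
qed

lemma cyc_rotate: "ws \<noteq> [] \<Longrightarrow> cyc h (rotate n ws) = cyc h ws"
  by (induction n) (auto simp: cyc_rotate1)

lemma dg_rotate1: "dg h (rotate1 ws) = dg h ws"
  unfolding dg_def by (cases ws) auto

lemma dg_rotate: "dg h (rotate n ws) = dg h ws"
  by (induction n) (auto simp: dg_rotate1)

lemma dg_append: "dg h (xs @ ys) = dg h xs + dg h ys"
  unfolding dg_def by simp

lemma cyc_pc: "cyc h (a # M) = pc h (a # M @ [a])"
proof -
  have "pc h ((a # M) @ [a]) = pc h (a # M) + h (last (a # M)) a"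
    using pc_append[of "a # M" "[a]" h] by simp
  then show ?thesis by (simp add: cyc_def)
qed

lemma L1: "ws \<noteq> [] \<Longrightarrow> set ws \<subseteq> {0..1} \<Longrightarrow> wmonge h \<Longrightarrow> dg h ws \<le> cyc h ws"
proof (induction "length ws" arbitrary: ws rule: less_induct)
  case less
  define m where "m = Max (set ws)"
  have "m \<in> set ws" using less.prems by (simp add: m_def)
  then obtain k where k: "k < length ws" "ws ! k = m" by (metis in_set_conv_nth)
  define ws' where "ws' = rotate k ws"
  have ne: "ws' \<noteq> []" using less.prems by (simp add: ws'_def)
  have hd': "hd ws' = m" using k less.prems by (simp add: ws'_def hd_rotate_conv_nth)
  have set': "set ws' = set ws" by (simp add: ws'_def)
  then obtain rest where ws': "ws' = m # rest" using ne hd' by (cases ws') auto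
  have "dg h ws' \<le> cyc h ws'"
  proof (cases "rest = []")
    case True then show ?thesis using ws' by (simp add: dg_def cyc_def)
  next
    case False
    have len: "length rest < length ws" using ws' by (metis length_Cons length_rotate lessI ws'_def)
    have sr: "set rest \<subseteq> {0..1}" using set' ws' less.prems by auto
    have IH: "dg h rest \<le> cyc h rest" using less.hyps[OF len False sr less.prems(3)] .
    have mx: "\<And>y. y \<in> set ws \<Longrightarrow> y \<le> m" using less.prems by (simp add: m_def)
    have l1: "last rest \<in> set rest" "hd rest \<in> set rest" using False by auto
    then have l2: "last rest \<le> m" "hd rest \<le> m" using mx set' ws' by auto
    have l3: "last rest \<in> {0..1}" "hd rest \<in> {0..1}" using l1 sr by auto
    have m01: "m \<in> {0..1}" using \<open>m \<in> set ws\<close> less.prems by auto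
    have "h (last rest) (hd rest) + h m m \<le> h (last rest) m + h m (hd rest)"
      using wmongeD[OF less.prems(3), of "last rest" m "hd rest" m] l3 l2 m01 by auto
    moreover have "cyc h ws' = h m (hd rest) + pc h rest + h (last rest) m"
      using ws' False by (simp add: cyc_def pc_Cons)
    moreover have "dg h ws' = h m m + dg h rest" using ws' by (simp add: dg_def)
    ultimately show ?thesis using IH unfolding cyc_def by linarith
  qed
  then show ?case using less.prems by (simp add: ws'_def cyc_rotate dg_rotate)
qed

lemma crossing: "L \<noteq> [] \<Longrightarrow> hd L > (t::real) \<Longrightarrow> last L \<le> t \<Longrightarrow>
  \<exists>U c d V. L = U @ c # d # V \<and> t < c \<and> d \<le> t"
proof (induction L)
  case Nil then show ?case by simp
next
  case (Cons y L)
  have "L \<noteq> []" using Cons.prems by (cases L) auto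
  show ?case
  proof (cases "hd L \<le> t")
    case True
    then show ?thesis using Cons \<open>L \<noteq> []\<close>
      by (intro exI[of _ "[]"] exI[of _ y] exI[of _ "hd L"] exI[of _ "tl L"]) auto
  next
    case False
    then obtain U c d V where "L = U @ c # d # V \<and> t < c \<and> d \<le> t"
      using Cons \<open>L \<noteq> []\<close> by auto
    then show ?thesis by (intro exI[of _ "y # U"]) auto
  qed
qed

lemma rect_mono:
  assumes W: "wmonge h" and r: "a \<le> a'" "a' < t" "t < c" "d \<le> t" "t < b'" "b' \<le> b"
    and i: "a \<in> {0..1}" "b \<in> {0..1}" "c \<in> {0..1}" "d \<in> {0..1}"
  shows "h a' b' + h t t - h a' t - h t b' \<le> h a b + h c d - h a d - h c b"
proof -
  have i2: "a' \<in> {0..1}" "b' \<in> {0..1}" "t \<in> {0..1}" using r i by auto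
  note M = wmongeD[OF W]
  have 1: "h a d + h a' t \<le> h a t + h a' d" using M[of a a' d t] r i i2 by auto
  have 2: "h a t + h a' b' \<le> h a b' + h a' t" using M[of a a' t b'] r i i2 by auto
  have 3: "h a b' + h a' b \<le> h a b + h a' b'" using M[of a a' b' b] r i i2 by auto
  have 4: "h a' d + h t t \<le> h a' t + h t d" using M[of a' t d t] r i i2 by auto
  have 6: "h a' b' + h t b \<le> h a' b + h t b'" using M[of a' t b' b] r i i2 by auto
  have 7: "h t d + h c t \<le> h t t + h c d" using M[of t c d t] r i i2 by auto
  have 8: "h t t + h c b' \<le> h t b' + h c t" using M[of t c t b'] r i i2 by auto
  have 9: "h t b' + h c b \<le> h t b + h c b'" using M[of t c b' b] r i i2 by auto
  show ?thesis using 1 2 3 4 6 7 8 9 by linarith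
qed

lemma L2:
  assumes W: "wmonge h" and s: "set (a # b # rest) \<subseteq> {0..1}"
    and r: "a \<le> a'" "a' < t" "t < b'" "b' \<le> b"
  shows "dg h (a # b # rest) + (h a' b' + h t t - h a' t - h t b') \<le> cyc h (a # b # rest)"
proof -
  define L where "L = b # rest @ [a]"
  obtain U c d V where UV: "L = U @ c # d # V" "t < c" "d \<le> t"
    using crossing[of L t] r by (auto simp: L_def)
  have hdU: "hd (U @ [c]) = b" using UV(1) by (cases U) (auto simp: L_def)
  have "last L = a" by (simp add: L_def)
  then have "last (d # V) = a" using UV(1) by simp
  then obtain W' where W': "d # V = W' @ [a]" by (metis append_butlast_last_id list.distinct(1))
  have brest: "b # rest = U @ [c] @ W'" using UV(1) W' unfolding L_def by simp
  have setC: "set (U @ [c]) \<subseteq> {0..1}" "set (a # W') \<subseteq> {0..1}" using s brest by auto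
  have "d \<in> set (a # W')"
  proof -
    have "d \<in> set (W' @ [a])" using W' by (metis list.set_intros(1))
    then show ?thesis by simp
  qed
  then have c01: "c \<in> {0..1}" "d \<in> {0..1}" using setC by auto
  have e1: "cyc h (U @ [c]) = pc h (U @ [c]) + h c b" using hdU by (simp add: cyc_def)
  have "a # W' @ [a] = a # d # V" using W' by simp
  then have e2: "cyc h (a # W') = h a d + pc h (d # V)" by (simp add: cyc_pc)
  have e3: "cyc h (a # b # rest) = h a b + pc h (U @ [c]) + h c d + pc h (d # V)"
  proof -
    have "cyc h (a # b # rest) = pc h (a # L)" by (simp add: cyc_pc L_def)
    also have "\<dots> = h a b + pc h L" by (simp add: L_def)
    also have "pc h L = pc h ((U @ [c]) @ (d # V))" using UV(1) by simp
    also have "\<dots> = pc h (U @ [c]) + h c d + pc h (d # V)" using pc_append[of "U @ [c]" "d # V" h] by simp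
    finally show ?thesis by simp
  qed
  have e4: "dg h (a # b # rest) = dg h (U @ [c]) + dg h (a # W')"
    using brest by (simp add: dg_def)
  have i1: "dg h (U @ [c]) \<le> cyc h (U @ [c])" using L1[OF _ setC(1) W] by simp
  have i2: "dg h (a # W') \<le> cyc h (a # W')" using L1[OF _ setC(2) W] by simp
  have i3: "h a' b' + h t t - h a' t - h t b' \<le> h a b + h c d - h a d - h c b"
    using rect_mono[OF W r(1,2) UV(2,3) r(3,4)] s c01 by auto
  show ?thesis using e1 e2 e3 e4 i1 i2 i3 by linarith
qed



lemma lip2:
  assumes L: "C-lipschitz_on ({0..1} \<times> {0..1}) (\<lambda>(a, b). h a b)"
    and "u \<in> {0..1}" "v \<in> {0..1}" "u' \<in> {0..1}" "v' \<in> {0..1}"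
  shows "\<bar>h u v - h u' v'\<bar> \<le> C * (\<bar>u - u'\<bar> + \<bar>v - v'\<bar>)"
proof -
  have C0: "0 \<le> C" using lipschitz_on_nonneg[OF L] .
  have "dist ((\<lambda>(a, b). h a b) (u, v)) ((\<lambda>(a, b). h a b) (u', v')) \<le> C * dist (u, v) (u', v')"
    by (rule lipschitz_onD[OF L]) (use assms in auto)
  moreover have "dist (u, v) (u', v') \<le> \<bar>u - u'\<bar> + \<bar>v - v'\<bar>"
    unfolding dist_Pair_Pair dist_real_def using sqrt_sum_squares_le_sum_abs[of "u - u'" "v - v'"] by simp
  ultimately show ?thesis using mult_left_mono[OF _ C0] by (force simp: dist_real_def)
qed

lemma shift_pow: "(shift ^^ n) z = (\<lambda>i. z (i + n))"
  by (induction n) (auto simp: shift_def)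

lemma dX_coord:
  assumes "f \<in> Xsp" "g \<in> Xsp"
  shows "\<bar>f k - g k\<bar> \<le> 2 ^ (k + 1) * dX f g"
proof -
  let ?a = "\<lambda>i. \<bar>f i - g i\<bar> / 2 ^ (i + 1)"
  have b: "\<bar>f i - g i\<bar> \<le> 1" for i
  proof -
    have "0 \<le> f i" "f i \<le> 1" "0 \<le> g i" "g i \<le> 1" using assms by (auto simp: Xsp_def)
    then show ?thesis by arith
  qed
  have "norm (?a i) \<le> (1/2) ^ i" for i
  proof -
    have "norm (?a i) = \<bar>f i - g i\<bar> / 2 ^ (i + 1)" by simp
    also have "\<dots> \<le> 1 / 2 ^ (i + 1)" using b[of i] by (simp add: divide_right_mono)
    also have "\<dots> \<le> 1 / 2 ^ i" by (rule divide_left_mono) auto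
    also have "\<dots> = (1/2) ^ i" by (simp add: power_one_over)
    finally show ?thesis .
  qed
  then have sm: "summable ?a"
    by (intro summable_comparison_test[OF _ summable_geometric[of "1/2::real"]]) auto
  have "sum ?a {k} \<le> suminf ?a" by (rule sum_le_suminf[OF sm]) auto
  then have "?a k \<le> dX f g" by (simp add: dX_def)
  then show ?thesis by (simp add: field_simps)
qed

lemma per_mod:
  fixes f :: "nat \<Rightarrow> 'a" and q :: nat
  assumes "\<And>i. f (i + q) = f i"
  shows "f i = f (i mod q)"
proof -
  have "f (r + q * k) = f r" for r k
  proof (induction k)
    case 0 then show ?case by simp
  next
    case (Suc k)
    have "f (r + q * Suc k) = f ((r + q * k) + q)" by (simp add: algebra_simps)
    also have "\<dots> = f (r + q * k)" by (rule assms)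
    also have "\<dots> = f r" by (rule Suc.IH)
    finally show ?case .
  qed
  then show ?thesis by (metis mod_mult_div_eq add.commute)
qed

lemma mane_loops:
  assumes "mane \<phi> x y = 0" "\<epsilon> > 0" "\<delta> > 0"
  shows "\<exists>n z. n \<ge> 1 \<and> z \<in> Bset x y n \<epsilon> \<and> (\<Sum>i<n. \<phi> ((shift ^^ i) z) - alpha \<phi>) < \<delta>"
proof -
  define F where "F = (\<lambda>e. Inf {ereal (\<Sum>i<n. \<phi> ((shift ^^ i) z) - alpha \<phi>) | n z. n \<ge> 1 \<and> z \<in> Bset x y n e})"
  have mono: "F e2 \<le> F e1" if "e1 \<le> e2" for e1 e2
    unfolding F_def
  proof (rule Inf_superset_mono, safe)
    fix n z assume a: "n \<ge> 1" "z \<in> Bset x y n e1"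
    then have "z \<in> Bset x y n e2" using that by (auto simp: Bset_def)
    then show "\<exists>na za. ereal (\<Sum>i<n. \<phi> ((shift ^^ i) z) - alpha \<phi>) = ereal (\<Sum>i<na. \<phi> ((shift ^^ i) za) - alpha \<phi>) \<and> na \<ge> 1 \<and> za \<in> Bset x y na e2"
      using a by blast
  qed
  define S where "S = (SUP e\<in>{0<..}. F e)"
  have lim: "(F \<longlongrightarrow> S) (at_right 0)"
  proof (rule order_tendstoI)
    fix a assume "a < S"
    then obtain e0 where e0: "e0 > 0" "a < F e0" unfolding S_def less_SUP_iff by auto
    show "eventually (\<lambda>e. a < F e) (at_right 0)"
      using eventually_at_right_real[OF e0(1)]
      by (rule eventually_mono) (use e0 mono in \<open>auto intro: less_le_trans\<close>)
  next
    fix a assume "S < a"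
    show "eventually (\<lambda>e. F e < a) (at_right 0)"
      using eventually_at_right_real[OF zero_less_one]
    proof (rule eventually_mono)
      fix e assume "e \<in> {0<..<(1::real)}"
      then have "F e \<le> S" unfolding S_def by (intro SUP_upper) auto
      then show "F e < a" using \<open>S < a\<close> by (rule le_less_trans)
    qed
  qed
  have "mane \<phi> x y = Lim (at_right 0) F" by (simp add: mane_def F_def)
  also have "\<dots> = S" by (rule tendsto_Lim[OF _ lim]) simp
  finally have "S = 0" using assms by simp
  then have "F \<epsilon> \<le> 0" using assms unfolding S_def by (metis SUP_upper greaterThan_iff)
  then have "F \<epsilon> < ereal \<delta>" using assms by (simp add: le_less_trans)
  then show ?thesis unfolding F_def Inf_less_iff by (auto, blast)
qed

lemma alpha_le:
  assumes L: "C-lipschitz_on ({0..1} \<times> {0..1}) (\<lambda>(a, b). h a b)" and b: "b \<in> {0..1}"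
  shows "alpha (\<lambda>z. h (z 0) (z 1)) \<le> h b b"
proof -
  define R where "R = restrict_space (borel :: (nat \<Rightarrow> real) measure) Xsp"
  define c where "c = (\<lambda>_::nat. b)"
  define \<phi> where "\<phi> = (\<lambda>z::nat \<Rightarrow> real. h (z 0) (z 1))"
  have spR: "space R = Xsp" by (simp add: R_def space_restrict_space)
  have cX: "c \<in> Xsp" using b by (simp add: Xsp_def c_def)
  have shc: "shift c = c" by (simp add: shift_def c_def)
  have cont_shift: "continuous_on UNIV shift" unfolding shift_def
    by (intro continuous_on_coordinatewise_then_product continuous_on_product_coordinates)
  have shift_meas: "shift \<in> measurable R R"
    unfolding R_def
    by (rule measurable_restrict_space3[OF borel_measurable_continuous_onI[OF cont_shift]])
      (auto simp: Xsp_def shift_def)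
  have c1: "continuous_on ({0..1} \<times> {0..1}) (\<lambda>(a, b). h a b)"
    by (rule lipschitz_on_continuous_on[OF L])
  have c2: "continuous_on Xsp (\<lambda>z::nat\<Rightarrow>real. (z 0, z 1))"
    by (intro continuous_on_Pair continuous_on_subset[OF continuous_on_product_coordinates]) auto
  have c3: "(\<lambda>z::nat\<Rightarrow>real. (z 0, z 1)) ` Xsp \<subseteq> {0..1} \<times> {0..1}" by (auto simp: Xsp_def)
  have cont_phi: "continuous_on Xsp \<phi>"
    using continuous_on_compose2[OF c1 c2 c3] by (simp add: \<phi>_def)
  have phi_meas: "\<phi> \<in> borel_measurable R"
    unfolding R_def by (rule borel_measurable_continuous_on_restrict[OF cont_phi])
  define M where "M = return R c"
  have sM: "sets M = sets R" by (simp add: M_def)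
  have inv: "inv_prob M"
    unfolding inv_prob_def
  proof (intro conjI)
    show "prob_space M" unfolding M_def by (rule prob_space_return) (simp add: spR cX)
    show "sets M = sets (restrict_space borel Xsp)" using sM by (simp add: R_def)
    have mm: "measurable M M = measurable R R" by (rule measurable_cong_sets[OF sM sM])
    show "shift \<in> measurable M M" using shift_meas mm by simp
    have "distr M M shift = return M (shift c)"
      unfolding M_def by (rule distr_return) (use shift_meas mm M_def spR cX in auto)
    also have "\<dots> = M" using shc by (simp add: M_def return_cong[OF sM[unfolded M_def]])
    finally show "distr M M shift = M" .
  qed
  have int: "integral\<^sup>L M \<phi> = h b b"
    unfolding M_def by (subst integral_return) (use phi_meas spR cX in \<open>auto simp: \<phi>_def c_def\<close>)
  define B where "B = \<bar>h 0 0\<bar> + 2 * C"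
  have C0: "0 \<le> C" using lipschitz_on_nonneg[OF L] .
  have hb: "- B \<le> h u v" if "u \<in> {0..1}" "v \<in> {0..1}" for u v
  proof -
    have "\<bar>h u v - h 0 0\<bar> \<le> C * (\<bar>u - 0\<bar> + \<bar>v - 0\<bar>)" by (rule lip2[OF L]) (use that in auto)
    moreover have "C * (\<bar>u - 0\<bar> + \<bar>v - 0\<bar>) \<le> C * 2" using that C0 by (intro mult_left_mono) auto
    ultimately show ?thesis unfolding B_def by linarith
  qed
  have bdd: "bdd_below {integral\<^sup>L M \<phi> | M. inv_prob M}"
  proof (rule bdd_belowI)
    fix r assume "r \<in> {integral\<^sup>L M \<phi> | M. inv_prob M}"
    then obtain M' where M': "inv_prob M'" "r = integral\<^sup>L M' \<phi>" by auto
    then have ps: "prob_space M'" and sp: "space M' = Xsp"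
      using sets_eq_imp_space_eq[of M' "restrict_space borel Xsp"]
      by (auto simp: inv_prob_def space_restrict_space)
    have pos: "- B \<le> \<phi> z" if "z \<in> space M'" for z
      using that sp hb by (auto simp: \<phi>_def Xsp_def)
    show "- B \<le> r"
    proof (cases "integrable M' \<phi>")
      case True
      then show ?thesis using prob_space.integral_ge_const[OF ps True AE_I2[OF pos]] M' by simp
    next
      case False
      then show ?thesis using M' C0 not_integrable_integral_eq[OF False] by (simp add: B_def)
    qed
  qed
  have "alpha \<phi> \<le> h b b"
    unfolding alpha_def by (rule cInf_lower[OF _ bdd]) (use inv int in force)
  then show ?thesis by (simp add: \<phi>_def)
qed



lemma pc_map: "pc h (map z [0..<Suc n]) = (\<Sum>i<n. h (z i) (z (Suc i)))"
proof (induction n)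
  case 0 then show ?case by simp
next
  case (Suc n)
  have "map z [0..<Suc (Suc n)] = map z [0..<Suc n] @ [z (Suc n)]" by simp
  then have "pc h (map z [0..<Suc (Suc n)]) = pc h (map z [0..<Suc n]) + h (z n) (z (Suc n))"
    using pc_append[of "map z [0..<Suc n]" "[z (Suc n)]" h] by (simp del: upt_Suc add: last_map)
  then show ?case using Suc by simp
qed

lemma loop_cyc:
  assumes "n \<ge> 1"
  shows "(\<Sum>i<n. h (z i) (z (Suc i))) = cyc h (map z [0..<n]) - h (z (n-1)) (z 0) + h (z (n-1)) (z n)"
proof -
  obtain m where m: "n = Suc m" using assms by (cases n) auto
  have "map z [0..<Suc (Suc m)] = map z [0..<Suc m] @ [z (Suc m)]" by simp
  then have "pc h (map z [0..<Suc (Suc m)]) = pc h (map z [0..<Suc m]) + h (z m) (z (Suc m))"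
    using pc_append[of "map z [0..<Suc m]" "[z (Suc m)]" h] by (simp del: upt_Suc add: last_map)
  moreover have "cyc h (map z [0..<Suc m]) = pc h (map z [0..<Suc m]) + h (z m) (z 0)"
    by (simp del: upt_Suc add: cyc_def last_map hd_map)
  ultimately show ?thesis using pc_map[of h z n] m by simp
qed

lemma dg_map: "dg h (map z [0..<n]) = (\<Sum>i<n. h (z i) (z i))"
  unfolding dg_def by (simp add: sum_list_sum_nth atLeast0LessThan)

lemma loop1:
  assumes W: "wmonge h"
    and lipv: "\<And>u v v'. u \<in> {0..1} \<Longrightarrow> v \<in> {0..1} \<Longrightarrow> v' \<in> {0..1} \<Longrightarrow> h u v - h u v' \<le> C * \<bar>v - v'\<bar>"
    and z01: "\<And>i. z i \<in> {0..1}" and n: "n \<ge> 1"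
  shows "(\<Sum>i<n. h (z i) (z i)) - C * \<bar>z n - z 0\<bar> \<le> (\<Sum>i<n. h (z i) (z (Suc i)))"
proof -
  have "dg h (map z [0..<n]) \<le> cyc h (map z [0..<n])"
    by (rule L1[OF _ _ W]) (use n z01 in auto)
  moreover have "h (z (n-1)) (z 0) - h (z (n-1)) (z n) \<le> C * \<bar>z 0 - z n\<bar>" using lipv z01 by blast
  ultimately show ?thesis using loop_cyc[OF n, of h z] dg_map[of h z n] by (simp add: abs_minus_commute)
qed

lemma loop2:
  assumes W: "wmonge h"
    and lipv: "\<And>u v v'. u \<in> {0..1} \<Longrightarrow> v \<in> {0..1} \<Longrightarrow> v' \<in> {0..1} \<Longrightarrow> h u v - h u v' \<le> C * \<bar>v - v'\<bar>"
    and z01: "\<And>i. z i \<in> {0..1}" and n: "n \<ge> 1"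
    and i: "i < n" "z i \<le> a'" "a' < t" "t < b'" "b' \<le> z ((i + 1) mod n)"
  shows "(\<Sum>i<n. h (z i) (z i)) + (h a' b' + h t t - h a' t - h t b') - C * \<bar>z n - z 0\<bar>
     \<le> (\<Sum>i<n. h (z i) (z (Suc i)))"
proof -
  have n2: "n \<ge> 2"
  proof (rule ccontr)
    assume "\<not> n \<ge> 2"
    then have "n = 1" using n by simp
    then show False using i by simp
  qed
  define ws where "ws = map z [0..<n]"
  define rw where "rw = rotate i ws"
  have len: "length rw = n" by (simp add: rw_def ws_def)
  have "\<exists>a0 b0 rest. rw = a0 # b0 # rest"
    using len n2 by (cases rw; cases "tl rw") auto
  then obtain a0 b0 rest where rw: "rw = a0 # b0 # rest" by blast
  have "a0 = rw ! 0" using rw by simp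
  also have "\<dots> = ws ! ((0 + i) mod n)" unfolding rw_def using n by (subst nth_rotate) (auto simp: ws_def)
  also have "\<dots> = z i" using i by (simp add: ws_def)
  finally have a0: "a0 = z i" .
  have "b0 = rw ! 1" using rw by simp
  also have "\<dots> = ws ! ((1 + i) mod n)" unfolding rw_def using n2 by (subst nth_rotate) (auto simp: ws_def)
  also have "\<dots> = z ((i + 1) mod n)" using n by (simp add: ws_def add.commute)
  finally have b0: "b0 = z ((i + 1) mod n)" .
  have srw: "set rw \<subseteq> {0..1}" using z01 by (auto simp: rw_def ws_def)
  have "dg h rw + (h a' b' + h t t - h a' t - h t b') \<le> cyc h rw"
    unfolding rw by (rule L2[OF W]) (use srw rw a0 b0 i in auto)
  moreover have "dg h rw = dg h ws" "cyc h rw = cyc h ws"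
    using n by (auto simp: rw_def ws_def dg_rotate cyc_rotate)
  moreover have "h (z (n-1)) (z 0) - h (z (n-1)) (z n) \<le> C * \<bar>z 0 - z n\<bar>" using lipv z01 by blast
  ultimately show ?thesis using loop_cyc[OF n, of h z] dg_map[of h z n]
    by (simp add: abs_minus_commute ws_def)
qed



theorem lemma3p3:
  fixes h :: "real \<Rightarrow> real \<Rightarrow> real" and x :: "nat \<Rightarrow> real"
  assumes "classH h"
    and "x \<in> aubry (\<lambda>z. h (z 0) (z 1))"
    and "\<exists>p>0. (shift ^^ p) x = x"
  shows "\<exists>a \<in> mset_h h. x = (\<lambda>_. a)"
proof -
  from assms(1) obtain C where L: "C-lipschitz_on ({0..1} \<times> {0..1}) (\<lambda>(a, b). h a b)"
    by (auto simp: classH_def)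
  have C0: "0 \<le> C" using lipschitz_on_nonneg[OF L] .
  have strict: "h p r + h q s < h p s + h q r"
    if "p \<in> {0..1}" "q \<in> {0..1}" "r \<in> {0..1}" "s \<in> {0..1}" "p < q" "r < s" for p q r s
    using assms(1) that unfolding classH_def by blast
  have W: "wmonge h" unfolding wmonge_def
  proof (intro allI impI)
    fix p q r s :: real
    assume a: "p \<in> {0..1} \<and> q \<in> {0..1} \<and> r \<in> {0..1} \<and> s \<in> {0..1} \<and> p \<le> q \<and> r \<le> s"
    show "h p r + h q s \<le> h p s + h q r"
    proof (cases "p < q \<and> r < s")
      case True then show ?thesis using strict[of p q r s] a by auto
    next
      case False then have "p = q \<or> r = s" using a by auto
      then show ?thesis by auto
    qed
  qed
  have lipv: "h u v - h u v' \<le> C * \<bar>v - v'\<bar>" if "u \<in> {0..1}" "v \<in> {0..1}" "v' \<in> {0..1}" for u v v'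
    using lip2[OF L that(1,2) that(1,3)] by simp
  have hb: "- (\<bar>h 0 0\<bar> + 2 * C) \<le> h u u" if "u \<in> {0..1}" for u
  proof -
    have "\<bar>h u u - h 0 0\<bar> \<le> C * (\<bar>u - 0\<bar> + \<bar>u - 0\<bar>)" by (rule lip2[OF L]) (use that in auto)
    moreover have "C * (\<bar>u - 0\<bar> + \<bar>u - 0\<bar>) \<le> C * 2" using that C0 by (intro mult_left_mono) auto
    ultimately show ?thesis by linarith
  qed
  define hs where "hs = hstar h"
  define \<alpha> where "\<alpha> = alpha (\<lambda>z. h (z 0) (z 1))"
  have hs_le: "hs \<le> h b b" if "b \<in> {0..1}" for b
    unfolding hs_def hstar_def
    by (rule cInf_lower) (use that hb in \<open>auto intro!: bdd_belowI2[where m = "- (\<bar>h 0 0\<bar> + 2 * C)"]\<close>)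
  have al: "\<alpha> \<le> hs"
    unfolding hs_def hstar_def \<alpha>_def by (rule cInf_greatest) (use alpha_le[OF L] in auto)
  from assms(2) have xX: "x \<in> Xsp" and mane: "mane (\<lambda>z. h (z 0) (z 1)) x x = 0"
    by (auto simp: aubry_def)
  obtain p where p: "p > 0" "(shift ^^ p) x = x" using assms(3) by auto
  have xper: "x (i + p) = x i" for i using fun_cong[OF p(2)[unfolded shift_pow], of i] by simp
  have x01: "x i \<in> {0..1}" for i using xX by (auto simp: Xsp_def)
  have LOOP: "\<exists>n z. n \<ge> 1 \<and> (\<forall>i. z i \<in> {0..1}) \<and> (\<forall>k. \<bar>z k - x k\<bar> \<le> 2 ^ (k + 1) * \<epsilon>)
      \<and> (\<forall>k. \<bar>z (k + n) - x k\<bar> \<le> 2 ^ (k + 1) * \<epsilon>)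
      \<and> (\<Sum>i<n. h (z i) (z (Suc i))) < real n * \<alpha> + \<delta>" if e: "\<epsilon> > 0" "\<delta> > 0" for \<epsilon> \<delta>
  proof -
    obtain n z where nz: "n \<ge> 1" "z \<in> Bset x x n \<epsilon>"
      and s: "(\<Sum>i<n. h (z i) (z (Suc i)) - \<alpha>) < \<delta>"
      using mane_loops[OF mane e] unfolding shift_pow \<alpha>_def by auto
    have zX: "z \<in> Xsp" and d1: "dX x z < \<epsilon>" and d2: "dX (\<lambda>i. z (i + n)) x < \<epsilon>"
      using nz by (auto simp: Bset_def shift_pow)
    have znX: "(\<lambda>i. z (i + n)) \<in> Xsp" using zX by (auto simp: Xsp_def)
    have c1: "\<bar>z k - x k\<bar> \<le> 2 ^ (k + 1) * \<epsilon>" for k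
    proof -
      have "\<bar>x k - z k\<bar> \<le> 2 ^ (k + 1) * dX x z" by (rule dX_coord[OF xX zX])
      also have "\<dots> \<le> 2 ^ (k + 1) * \<epsilon>" using d1 by (intro mult_left_mono) auto
      finally show ?thesis by (simp add: abs_minus_commute)
    qed
    have c2: "\<bar>z (k + n) - x k\<bar> \<le> 2 ^ (k + 1) * \<epsilon>" for k
    proof -
      have "\<bar>z (k + n) - x k\<bar> \<le> 2 ^ (k + 1) * dX (\<lambda>i. z (i + n)) x" using dX_coord[OF znX xX, of k] by simp
      also have "\<dots> \<le> 2 ^ (k + 1) * \<epsilon>" using d2 by (intro mult_left_mono) auto
      finally show ?thesis .
    qed
    have "(\<Sum>i<n. h (z i) (z (Suc i)) - \<alpha>) = (\<Sum>i<n. h (z i) (z (Suc i))) - real n * \<alpha>"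
      by (simp add: sum_subtractf)
    then show ?thesis using nz(1) zX c1 c2 s
      by (intro exI[of _ n] exI[of _ z]) (auto simp: Xsp_def)
  qed

  have haa: "h (x 0) (x 0) \<le> hs"
  proof (rule field_le_epsilon)
    fix e :: real assume e: "e > 0"
    define \<epsilon> where "\<epsilon> = e / (2 * (8 * C + 1))"
    have \<epsilon>: "\<epsilon> > 0" using e C0 by (simp add: \<epsilon>_def)
    obtain n z where n: "n \<ge> 1" and z01: "\<forall>i. z i \<in> {0..1}"
      and c1: "\<forall>k. \<bar>z k - x k\<bar> \<le> 2 ^ (k + 1) * \<epsilon>"
      and c2: "\<forall>k. \<bar>z (k + n) - x k\<bar> \<le> 2 ^ (k + 1) * \<epsilon>"
      and cost: "(\<Sum>i<n. h (z i) (z (Suc i))) < real n * \<alpha> + e / 2"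
      using LOOP[OF \<epsilon>, of "e/2"] e by auto
    have k1: "(\<Sum>i<n. h (z i) (z i)) - C * \<bar>z n - z 0\<bar> \<le> (\<Sum>i<n. h (z i) (z (Suc i)))"
      by (rule loop1[OF W lipv]) (use z01 n in auto)
    obtain m where m: "n = Suc m" using n by (cases n) auto
    have sd: "(\<Sum>i<n. h (z i) (z i)) = h (z 0) (z 0) + (\<Sum>i<m. h (z (Suc i)) (z (Suc i)))"
      by (simp add: m sum.lessThan_Suc_shift del: sum.lessThan_Suc)
    have sb: "real m * hs \<le> (\<Sum>i<m. h (z (Suc i)) (z (Suc i)))"
      using sum_bounded_below[of "{..<m}" hs "\<lambda>i. h (z (Suc i)) (z (Suc i))"] hs_le z01 by auto
    have na: "real n * \<alpha> \<le> real n * hs" using al by (simp add: mult_left_mono)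
    have nm: "real n * hs = real m * hs + hs" by (simp add: m algebra_simps)
    have d0: "\<bar>z 0 - x 0\<bar> \<le> 2 * \<epsilon>" using c1 by (metis add_0 power_one_right)
    have dn: "\<bar>z n - x 0\<bar> \<le> 2 * \<epsilon>" using c2 by (metis add_0 power_one_right)
    have d1: "\<bar>z n - z 0\<bar> \<le> 4 * \<epsilon>" using d0 dn by linarith
    have d2: "C * \<bar>z n - z 0\<bar> \<le> C * (4 * \<epsilon>)" using d1 C0 by (rule mult_left_mono)
    have "\<bar>h (x 0) (x 0) - h (z 0) (z 0)\<bar> \<le> C * (\<bar>x 0 - z 0\<bar> + \<bar>x 0 - z 0\<bar>)"
      by (rule lip2[OF L]) (use x01 z01 in auto)
    moreover have "C * (\<bar>x 0 - z 0\<bar> + \<bar>x 0 - z 0\<bar>) \<le> C * (4 * \<epsilon>)"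
      using d0 C0 by (intro mult_left_mono) (auto simp: abs_minus_commute)
    ultimately have d3: "h (x 0) (x 0) \<le> h (z 0) (z 0) + C * (4 * \<epsilon>)" by linarith
    have d4: "C * (4 * \<epsilon>) \<le> e / 4"
    proof -
      have "C * (4 * \<epsilon>) = (e / 4) * (8 * C / (8 * C + 1))" using C0 by (simp add: \<epsilon>_def field_simps)
      also have "\<dots> \<le> (e / 4) * 1" using C0 e by (intro mult_left_mono) auto
      finally show ?thesis by simp
    qed
    show "h (x 0) (x 0) \<le> hs + e" using k1 sd sb na nm d2 d3 d4 cost by linarith
  qed
  have hxx: "h (x 0) (x 0) = hs" using haa hs_le[OF x01[of 0]] by simp

  have const: "\<forall>i. x i = x 0"
  proof (rule ccontr)
    assume nc: "\<not> (\<forall>i. x i = x 0)"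
    have "\<exists>j<p. x j < x (Suc j)"
    proof (rule ccontr)
      assume "\<not> (\<exists>j<p. x j < x (Suc j))"
      then have dec: "\<And>j. j < p \<Longrightarrow> x (Suc j) \<le> x j" by (meson not_less)
      have chain: "k \<le> l \<longrightarrow> l \<le> p \<longrightarrow> x l \<le> x k" for k l
      proof (induction l)
        case 0 then show ?case by simp
      next
        case (Suc l)
        show ?case
        proof (intro impI)
          assume a: "k \<le> Suc l" "Suc l \<le> p"
          show "x (Suc l) \<le> x k"
          proof (cases "k = Suc l")
            case True then show ?thesis by simp
          next
            case False
            then have "k \<le> l" using a by simp
            then have "x l \<le> x k" using Suc a by simp
            moreover have "x (Suc l) \<le> x l" using dec a by simp
            ultimately show ?thesis by simp
          qed
        qed
      qed
      have xp: "x p = x 0" using xper[of 0] by simp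
      have small: "x k = x 0" if "k \<le> p" for k
        using chain[of 0 k] chain[of k p] that xp by auto
      have "x i = x 0" for i
      proof -
        have "x i = x (i mod p)" by (rule per_mod[of x p, OF xper])
        also have "\<dots> = x 0" using small[of "i mod p"] p(1) by simp
        finally show ?thesis .
      qed
      then show False using nc by auto
    qed
    then obtain j where j: "j < p" "x j < x (Suc j)" by auto
    define A where "A = x j"
    define B where "B = x (Suc j)"
    define t where "t = (A + B) / 2"
    define \<eta> where "\<eta> = (B - A) / 4"
    define a' where "a' = A + \<eta>"
    define b' where "b' = B - \<eta>"
    have AB: "A < B" using j by (simp add: A_def B_def)
    have o: "A < a'" "a' < t" "t < b'" "b' < B" "\<eta> > 0"
      using AB by (simp_all add: a'_def b'_def t_def \<eta>_def field_simps)
    have A01: "A \<in> {0..1}" "B \<in> {0..1}" using x01 by (simp_all add: A_def B_def)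
    then have i01: "a' \<in> {0..1}" "t \<in> {0..1}" "b' \<in> {0..1}" using o by auto
    define \<gamma> where "\<gamma> = h a' b' + h t t - h a' t - h t b'"
    have \<gamma>: "\<gamma> > 0" using strict[of a' t t b'] i01 o by (simp add: \<gamma>_def)
    define P where "P = {(u, v). u \<le> 2 * p \<and> v \<le> 2 * p \<and> x u \<noteq> x v}"
    define G where "G = (\<lambda>(u, v). \<bar>x u - x v\<bar>) ` P"
    have finP: "finite P" by (rule finite_subset[of _ "{..2*p} \<times> {..2*p}"]) (auto simp: P_def)
    have finG: "finite (insert 1 G)" using finP by (simp add: G_def)
    define g where "g = Min (insert 1 G)"
    have g: "g > 0" unfolding g_def using finG by (subst Min_gr_iff) (auto simp: G_def P_def)
    have gap: "g \<le> \<bar>x u - x v\<bar>" if "u \<le> 2 * p" "v \<le> 2 * p" "x u \<noteq> x v" for u v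
    proof -
      have "\<bar>x u - x v\<bar> \<in> insert 1 G" using that by (auto simp: G_def P_def)
      then show ?thesis unfolding g_def using finG by (rule Min_le[rotated])
    qed
    define K where "K = (2::real) ^ (2 * p + 2)"
    have K: "K > 0" by (simp add: K_def)
    have Kle: "(2::real) ^ (k + 1) \<le> K" if "k \<le> 2 * p + 1" for k
      unfolding K_def by (rule power_increasing) (use that in auto)
    define \<epsilon> where "\<epsilon> = min (min (g / (4 * K)) (\<eta> / (4 * K))) (\<gamma> / (8 * (C + 1)))"
    have \<epsilon>: "\<epsilon> > 0" using g o \<gamma> K C0 by (simp add: \<epsilon>_def)
    have Ke1: "K * \<epsilon> \<le> g / 4"
    proof -
      have "\<epsilon> \<le> g / (4 * K)" by (simp add: \<epsilon>_def)
      then have "K * \<epsilon> \<le> K * (g / (4 * K))" using K by (intro mult_left_mono) auto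
      then show ?thesis using K by simp
    qed
    have Ke2: "K * \<epsilon> \<le> \<eta> / 4"
    proof -
      have "\<epsilon> \<le> \<eta> / (4 * K)" by (simp add: \<epsilon>_def)
      then have "K * \<epsilon> \<le> K * (\<eta> / (4 * K))" using K by (intro mult_left_mono) auto
      then show ?thesis using K by simp
    qed
    have Ce: "C * (4 * \<epsilon>) < \<gamma> / 2"
    proof -
      have "\<epsilon> \<le> \<gamma> / (8 * (C + 1))" by (simp add: \<epsilon>_def)
      then have "C * (4 * \<epsilon>) \<le> C * (4 * (\<gamma> / (8 * (C + 1))))" using C0 by (intro mult_left_mono) auto
      also have "\<dots> = (\<gamma> / 2) * (C / (C + 1))" using C0 by (simp add: field_simps)
      also have "\<dots> < (\<gamma> / 2) * 1" using C0 \<gamma> by (intro mult_strict_left_mono) auto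
      finally show ?thesis by simp
    qed
    obtain n z where n: "n \<ge> 1" and z01: "\<forall>i. z i \<in> {0..1}"
      and c1: "\<forall>k. \<bar>z k - x k\<bar> \<le> 2 ^ (k + 1) * \<epsilon>"
      and c2: "\<forall>k. \<bar>z (k + n) - x k\<bar> \<le> 2 ^ (k + 1) * \<epsilon>"
      and cost: "(\<Sum>i<n. h (z i) (z (Suc i))) < real n * \<alpha> + \<gamma> / 2"
      using LOOP[OF \<epsilon>, of "\<gamma>/2"] \<gamma> by auto
    have ck1: "\<bar>z k - x k\<bar> \<le> K * \<epsilon>" if "k \<le> 2 * p + 1" for k
      using c1 mult_right_mono[OF Kle[OF that], of \<epsilon>] \<epsilon> by (meson less_imp_le order_trans)
    have ck2: "\<bar>z (k + n) - x k\<bar> \<le> K * \<epsilon>" if "k \<le> 2 * p + 1" for k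
      using c2 mult_right_mono[OF Kle[OF that], of \<epsilon>] \<epsilon> by (meson less_imp_le order_trans)
    have facts: "x (j mod n) = A \<and> x ((j mod n + 1) mod n) = B \<and> j mod n \<le> p \<and> (j mod n + 1) mod n \<le> p"
    proof (cases "p < n")
      case True
      then have "j mod n = j" "(j mod n + 1) mod n = Suc j" using j by auto
      then show ?thesis using j by (simp add: A_def B_def)
    next
      case False
      then have np: "n \<le> p" by simp
      have sm: "x (i + n) = x i" if "i < p" for i
      proof (rule ccontr)
        assume ne: "x (i + n) \<noteq> x i"
        then have "g \<le> \<bar>x (i + n) - x i\<bar>" using gap[of "i + n" i] that np by auto
        moreover have "\<bar>z (i + n) - x (i + n)\<bar> \<le> K * \<epsilon>" using ck1[of "i + n"] that np by auto
        moreover have "\<bar>z (i + n) - x i\<bar> \<le> K * \<epsilon>" using ck2[of i] that by auto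
        ultimately show False using Ke1 g by linarith
      qed
      have nper: "x (i + n) = x i" for i
      proof -
        have "x (i + n) = x ((i + n) mod p)" by (rule per_mod[of x p, OF xper])
        also have "(i + n) mod p = (i mod p + n) mod p" by (simp add: mod_add_left_eq)
        also have "x \<dots> = x (i mod p + n)" by (rule per_mod[of x p, OF xper, symmetric])
        also have "\<dots> = x (i mod p)" using sm[of "i mod p"] p(1) by simp
        also have "\<dots> = x i" by (rule per_mod[of x p, OF xper, symmetric])
        finally show ?thesis .
      qed
      have "x (j mod n) = x j" by (rule per_mod[of x n, OF nper, symmetric])
      moreover have "x ((j mod n + 1) mod n) = x (Suc j)"
      proof -
        have "(j mod n + 1) mod n = (j + 1) mod n" using mod_add_left_eq[of j n 1] by simp
        then show ?thesis using per_mod[of x n, OF nper, of "Suc j"] by simp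
      qed
      moreover have "j mod n < n" "(j mod n + 1) mod n < n" using n by auto
      then have "j mod n \<le> p" "(j mod n + 1) mod n \<le> p" using np by linarith+
      ultimately show ?thesis by (simp add: A_def B_def)
    qed
    define i0 where "i0 = j mod n"
    have i0n: "i0 < n" using n by (simp add: i0_def)
    have zi0: "z i0 \<le> a'"
    proof -
      have "\<bar>z i0 - x i0\<bar> \<le> K * \<epsilon>" using ck1[of i0] facts by (simp add: i0_def)
      then show ?thesis using facts Ke2 o by (simp add: i0_def a'_def) 
    qed
    have zi1: "b' \<le> z ((i0 + 1) mod n)"
    proof -
      have "\<bar>z ((i0 + 1) mod n) - x ((i0 + 1) mod n)\<bar> \<le> K * \<epsilon>" using ck1[of "(i0 + 1) mod n"] facts by (simp add: i0_def)
      then show ?thesis using facts Ke2 o by (simp add: i0_def b'_def) 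
    qed
    have k2: "(\<Sum>i<n. h (z i) (z i)) + \<gamma> - C * \<bar>z n - z 0\<bar> \<le> (\<Sum>i<n. h (z i) (z (Suc i)))"
      unfolding \<gamma>_def by (rule loop2[OF W lipv]) (use z01 n i0n zi0 zi1 o in auto)
    have sb: "real n * hs \<le> (\<Sum>i<n. h (z i) (z i))"
      using sum_bounded_below[of "{..<n}" hs "\<lambda>i. h (z i) (z i)"] hs_le z01 by auto
    have na: "real n * \<alpha> \<le> real n * hs" using al by (simp add: mult_left_mono)
    have d0: "\<bar>z 0 - x 0\<bar> \<le> 2 * \<epsilon>" using c1 by (metis add_0 power_one_right)
    have dn: "\<bar>z n - x 0\<bar> \<le> 2 * \<epsilon>" using c2 by (metis add_0 power_one_right)
    have d1: "\<bar>z n - z 0\<bar> \<le> 4 * \<epsilon>" using d0 dn by linarith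
    have d2: "C * \<bar>z n - z 0\<bar> \<le> C * (4 * \<epsilon>)" using d1 C0 by (rule mult_left_mono)
    show False using k2 sb na d2 Ce cost by linarith
  qed
  show ?thesis
  proof (rule bexI[of _ "x 0"])
    show "x = (\<lambda>_. x 0)" using const by auto
    show "x 0 \<in> mset_h h" using x01[of 0] hxx by (simp add: mset_h_def hs_def)
  qed
qed


end
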